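(* Let $M$ be a positive integer and let $S\subset\mathbb{R}^4$ be a finite set with $|S|\ge M+1$. For each $\lambda\in S$, let $B_\lambda$ be the smallest closed ball centered at $\lambda$ containing at least $M+1$ points of $S$ (counting $\lambda$ itself), and let $R_\lambda$ be its radius. For $\lambda\in S$ let \[ L_\lambda=\{\lambda'\in S: R_{\lambda'}\ge R_\lambda \text{ and } B_\lambda\cap B_{\lambda'}\neq\emptyset\}. \] Then $|L_\lambda|\ll M$ for every $\lambda\in S$, with an absolute implied constant.
   Context: Balls and distances are Euclidean in $\mathbb{R}^4$. *)

theory Defs
  imports "HOL-Analysis.Analysis"
begin

definition kradius :: "(real^4) set \<Rightarrow> nat \<Rightarrow> real^4 \<Rightarrow> real" where
  "kradius S M x = (LEAST r. 0 \<le> r \<and> M + 1 \<le> card (S \<inter> cball x r))"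

definition Lset :: "(real^4) set \<Rightarrow> nat \<Rightarrow> real^4 \<Rightarrow> (real^4) set" where
  "Lset S M x = {y \<in> S. kradius S M x \<le> kradius S M y \<and>
      cball x (kradius S M x) \<inter> cball y (kradius S M y) \<noteq> {}}"

end

theory Submission
  imports Defs
begin

lemma kradius_props:
  assumes fin: "finite S" and cS: "M + 1 \<le> card S"
  shows "0 \<le> kradius S M x \<and> M + 1 \<le> card (S \<inter> cball x (kradius S M x))"
    and "\<And>r. 0 \<le> r \<Longrightarrow> M + 1 \<le> card (S \<inter> cball x r) \<Longrightarrow> kradius S M x \<le> r"
proof -
  define D where "D = {d \<in> dist x ` S. M + 1 \<le> card (S \<inter> cball x d)}"
  have Sne: "S \<noteq> {}" using cS by auto
  have finD: "finite D" unfolding D_def using fin by auto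
  define dm where "dm = Max (dist x ` S)"
  have "S \<inter> cball x dm = S" using fin Sne unfolding dm_def by (auto simp: mem_cball)
  moreover have "dm \<in> dist x ` S" unfolding dm_def using fin Sne by (intro Max_in) auto
  ultimately have "dm \<in> D" using cS unfolding D_def by auto
  hence Dne: "D \<noteq> {}" by auto
  define r0 where "r0 = Min D"
  have r0D: "r0 \<in> D" unfolding r0_def using finD Dne by (rule Min_in)
  have P0: "0 \<le> r0 \<and> M + 1 \<le> card (S \<inter> cball x r0)" using r0D unfolding D_def by auto
  have minr: "r0 \<le> r" if "0 \<le> r" "M + 1 \<le> card (S \<inter> cball x r)" for r
  proof -
    define T where "T = S \<inter> cball x r"
    have finT: "finite T" using fin unfolding T_def by auto
    have Tne: "T \<noteq> {}" using that(2) unfolding T_def by auto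
    define d' where "d' = Max (dist x ` T)"
    have d'in: "d' \<in> dist x ` T" unfolding d'_def using finT Tne by (intro Max_in) auto
    have d'r: "d' \<le> r" using d'in unfolding T_def by (auto simp: mem_cball)
    have "S \<inter> cball x d' = T"
    proof
      show "S \<inter> cball x d' \<subseteq> T" using d'r unfolding T_def by (auto simp: mem_cball)
      show "T \<subseteq> S \<inter> cball x d'" unfolding d'_def using finT
        by (auto simp: mem_cball T_def intro!: Max_ge)
    qed
    hence "d' \<in> D" unfolding D_def using d'in that(2) unfolding T_def by auto
    hence "r0 \<le> d'" unfolding r0_def using finD by auto
    thus ?thesis using d'r by simp
  qed
  have eq: "kradius S M x = r0"
    unfolding kradius_def by (rule Least_equality) (use P0 minr in auto)
  show "0 \<le> kradius S M x \<and> M + 1 \<le> card (S \<inter> cball x (kradius S M x))" using eq P0 by simp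
  show "\<And>r. 0 \<le> r \<Longrightarrow> M + 1 \<le> card (S \<inter> cball x r) \<Longrightarrow> kradius S M x \<le> r"
    using eq minr by simp
qed

lemma kradius_ball:
  assumes fin: "finite S" and cS: "M + 1 \<le> card S"
  shows "card (S \<inter> ball y (kradius S M y)) \<le> M"
proof (rule ccontr)
  assume "\<not> ?thesis"
  hence c: "M + 1 \<le> card (S \<inter> ball y (kradius S M y))" by simp
  define T where "T = S \<inter> ball y (kradius S M y)"
  have finT: "finite T" using fin unfolding T_def by auto
  have Tne: "T \<noteq> {}" using c unfolding T_def by auto
  define d' where "d' = Max (dist y ` T)"
  have d'in: "d' \<in> dist y ` T" unfolding d'_def using finT Tne by (intro Max_in) auto
  have d'r: "d' < kradius S M y" using d'in unfolding T_def by (auto simp: mem_ball)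
  have "T \<subseteq> S \<inter> cball y d'" unfolding d'_def using finT
    by (auto simp: mem_cball T_def intro!: Max_ge)
  hence "card T \<le> card (S \<inter> cball y d')" using fin by (intro card_mono) auto
  hence "M + 1 \<le> card (S \<inter> cball y d')" using c unfolding T_def by simp
  moreover have "0 \<le> d'" using d'in by auto
  ultimately have "kradius S M y \<le> d'" using kradius_props(2)[OF fin cS] by blast
  thus False using d'r by simp
qed

lemma kradius_pos:
  assumes fin: "finite S" and cS: "M + 1 \<le> card S" and M: "1 \<le> M" and x: "x \<in> S"
  shows "0 < kradius S M x"
proof -
  have P: "0 \<le> kradius S M x" "M + 1 \<le> card (S \<inter> cball x (kradius S M x))"
    using kradius_props(1)[OF fin cS] by auto
  show ?thesis
  proof (rule ccontr)
    assume "\<not> ?thesis"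
    hence "kradius S M x = 0" using P by simp
    hence "card (S \<inter> cball x (kradius S M x)) \<le> 1"
      by (simp add: card_le_Suc0_iff_eq)
    thus False using P M by simp
  qed
qed


definition gcell :: "real^4 \<Rightarrow> (4 \<Rightarrow> int)" where
  "gcell w = (\<lambda>i. \<lfloor>8 * w $ i\<rfloor>)"

lemma gcell_close:
  assumes "gcell w1 = gcell w2"
  shows "norm (w1 - w2) < 1/2"
proof -
  have c: "\<bar>(w1 - w2) $ i\<bar> < 1/8" for i
  proof -
    have "\<lfloor>8 * w1 $ i\<rfloor> = \<lfloor>8 * w2 $ i\<rfloor>" using assms unfolding gcell_def by meson
    hence "8 * w1 $ i - 8 * w2 $ i < 1 \<and> 8 * w2 $ i - 8 * w1 $ i < 1"
      using floor_correct[of "8 * w1 $ i"] floor_correct[of "8 * w2 $ i"] by linarith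
    thus ?thesis by (simp only: vector_minus_component abs_less_iff) linarith
  qed
  have "norm (w1 - w2) \<le> (\<Sum>i\<in>UNIV. \<bar>(w1 - w2) $ i\<bar>)" by (rule norm_le_l1_cart)
  also have "\<dots> < (\<Sum>i\<in>(UNIV::4 set). 1/8)" by (rule sum_strict_mono) (use c in auto)
  also have "\<dots> = 1/2" by simp
  finally show ?thesis .
qed

lemma gcell_range:
  assumes "norm w < 2"
  shows "gcell w \<in> Pi\<^sub>E UNIV (\<lambda>_. {-16..16})"
proof -
  have a: "\<bar>w $ i\<bar> < 2" for i using component_le_norm_cart[of w i] assms by simp
  have "-16 < 8 * w $ i \<and> 8 * w $ i < 16" for i using a[of i] by (simp only: abs_less_iff) linarith
  have "-16 \<le> \<lfloor>8 * w $ i\<rfloor> \<and> \<lfloor>8 * w $ i\<rfloor> \<le> 16" for i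
  proof -
    have h: "-16 < 8 * w $ i \<and> 8 * w $ i < 16" by fact
    have "real_of_int (-17) < of_int \<lfloor>8 * w $ i\<rfloor>"
      using floor_correct[of "8 * w $ i"] h by (simp only: of_int_minus of_int_numeral) linarith
    hence 1: "-17 < \<lfloor>8 * w $ i\<rfloor>" by (simp only: of_int_less_iff)
    have "real_of_int \<lfloor>8 * w $ i\<rfloor> < of_int 16"
      using floor_correct[of "8 * w $ i"] h by (simp only: of_int_minus of_int_numeral) linarith
    hence 2: "\<lfloor>8 * w $ i\<rfloor> < 16" by (simp only: of_int_less_iff)
    show ?thesis using 1 2 by simp
  qed
  thus ?thesis unfolding gcell_def by auto
qed

theorem lemma4p5:
  shows "\<exists>C::real. \<forall>(M::nat) (S::(real^4) set) x.
           1 \<le> M \<longrightarrow> finite S \<longrightarrow> M + 1 \<le> card S \<longrightarrow> x \<in> S \<longrightarrow>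
           real (card (Lset S M x)) \<le> C * real M"
proof -
  define K :: "(bool \<times> (4 \<Rightarrow> int)) set" where "K = UNIV \<times> Pi\<^sub>E UNIV (\<lambda>_. {-16..16})"
  have finK: "finite K" unfolding K_def by (intro finite_cartesian_product finite_PiE) auto
  have "real (card (Lset S M x)) \<le> real (card K) * real M"
    if M: "1 \<le> M" and fin: "finite S" and cS: "M + 1 \<le> card S" and x: "x \<in> S" for M S x
  proof -
    let ?k = "kradius S M"
    define R where "R = ?k x"
    have Rpos: "0 < R" unfolding R_def by (rule kradius_pos[OF fin cS M x])
    define L where "L = Lset S M x"
    have LS: "L \<subseteq> S" unfolding L_def Lset_def by auto
    have finL: "finite L" using LS fin finite_subset by blast
    have Lprop: "R \<le> ?k y \<and> norm (y - x) \<le> R + ?k y" if "y \<in> L" for y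
    proof -
      from that obtain z where z: "z \<in> cball x R" "z \<in> cball y (?k y)" and Ry: "R \<le> ?k y"
        unfolding L_def Lset_def R_def by auto
      have "norm (y - x) \<le> dist x z + dist z y" using dist_triangle[of x y z]
        by (simp add: dist_norm norm_minus_commute dist_commute)
      thus ?thesis using z Ry by (auto simp: mem_cball dist_commute)
    qed
    define lab where "lab y = (if norm (y - x) < 2 * R
       then (True, gcell ((1/R) *\<^sub>R (y - x)))
       else (False, gcell ((1/norm (y - x)) *\<^sub>R (y - x))))" for y
    have labK: "lab y \<in> K" for y
    proof (cases "norm (y - x) < 2 * R")
      case True
      have "norm ((1/R) *\<^sub>R (y - x)) = norm (y - x) / R" using Rpos by simp
      also have "\<dots> < 2" using True Rpos by (simp add: divide_less_eq)
      finally have "norm ((1/R) *\<^sub>R (y - x)) < 2" .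
      thus ?thesis using True gcell_range unfolding lab_def K_def by auto
    next
      case False
      hence "norm (y - x) > 0" using Rpos by linarith
      hence "norm ((1/norm (y - x)) *\<^sub>R (y - x)) < 2" by simp
      thus ?thesis using False gcell_range unfolding lab_def K_def by auto
    qed
    define F where "F l = {y \<in> L. lab y = l}" for l
    have Fbound: "card (F l) \<le> M" for l
    proof (cases "F l = {}")
      case True thus ?thesis by simp
    next
      case False
      have finF: "finite (F l)" using finL unfolding F_def by auto
      obtain ys where ys: "ys \<in> F l" "\<And>y. y \<in> F l \<Longrightarrow> norm (y - x) \<le> norm (ys - x)"
      proof -
        have "Max ((\<lambda>y. norm (y - x)) ` F l) \<in> (\<lambda>y. norm (y - x)) ` F l"
          using finF False by (intro Max_in) auto
        then obtain ys where "ys \<in> F l" "norm (ys - x) = Max ((\<lambda>y. norm (y - x)) ` F l)" by auto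
        moreover have "norm (y - x) \<le> Max ((\<lambda>y. norm (y - x)) ` F l)" if "y \<in> F l" for y
          using finF that by (intro Max_ge) auto
        ultimately show ?thesis using that by metis
      qed
      have ysL: "ys \<in> L" using ys(1) unfolding F_def by auto
      have sub: "F l \<subseteq> S \<inter> ball ys (?k ys)"
      proof
        fix y assume yF: "y \<in> F l"
        have yL: "y \<in> L" using yF unfolding F_def by auto
        have same: "lab y = lab ys" using yF ys(1) unfolding F_def by auto
        have "norm (y - ys) < ?k ys"
        proof (cases "norm (y - x) < 2 * R")
          case True
          hence T2: "norm (ys - x) < 2 * R" using same unfolding lab_def by (auto split: if_splits)
          have "gcell ((1/R) *\<^sub>R (y - x)) = gcell ((1/R) *\<^sub>R (ys - x))"
            using same True T2 unfolding lab_def by auto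
          hence "norm ((1/R) *\<^sub>R (y - x) - (1/R) *\<^sub>R (ys - x)) < 1/2" by (rule gcell_close)
          hence "norm ((1/R) *\<^sub>R (y - ys)) < 1/2" by (simp add: algebra_simps)
          moreover have "norm ((1/R) *\<^sub>R (y - ys)) = norm (y - ys) / R" using Rpos by simp
          ultimately have "norm (y - ys) < R / 2" using Rpos by (simp add: divide_less_eq)
          thus ?thesis using Lprop[OF ysL] Rpos by simp
        next
          case False
          hence F2: "\<not> norm (ys - x) < 2 * R" using same unfolding lab_def by (auto split: if_splits)
          define d1 where "d1 = norm (y - x)"
          define d2 where "d2 = norm (ys - x)"
          define u1 where "u1 = (1/d1) *\<^sub>R (y - x)"
          define u2 where "u2 = (1/d2) *\<^sub>R (ys - x)"
          have d1: "2 * R \<le> d1" using False unfolding d1_def by simp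
          have d2: "2 * R \<le> d2" using F2 unfolding d2_def by simp
          have d12: "d1 \<le> d2" using ys(2)[OF yF] unfolding d1_def d2_def .
          have "gcell u1 = gcell u2"
            using same False F2 unfolding lab_def u1_def u2_def d1_def d2_def by auto
          hence u12: "norm (u1 - u2) < 1/2" by (rule gcell_close)
          have p1: "0 < d1" using d1 Rpos by linarith
          have p2: "0 < d2" using d2 Rpos by linarith
          have nu2: "norm u2 = 1" using p2 unfolding u2_def d2_def by simp
          have e1: "y - x = d1 *\<^sub>R u1" using p1 unfolding u1_def by simp
          have e2: "ys - x = d2 *\<^sub>R u2" using p2 unfolding u2_def by simp
          have "y - ys = d1 *\<^sub>R (u1 - u2) + (d1 - d2) *\<^sub>R u2"
            using e1 e2 by (simp add: algebra_simps)
          hence "norm (y - ys) \<le> norm (d1 *\<^sub>R (u1 - u2)) + norm ((d1 - d2) *\<^sub>R u2)"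
            by (metis norm_triangle_ineq)
          also have "\<dots> = d1 * norm (u1 - u2) + (d2 - d1)"
            using nu2 d1 d12 Rpos by simp
          also have "\<dots> < d1 / 2 + (d2 - d1)"
          proof -
            have "d1 * norm (u1 - u2) < d1 * (1/2)" using u12 p1 by (rule mult_strict_left_mono)
            thus ?thesis by simp
          qed
          also have "\<dots> \<le> ?k ys" using Lprop[OF ysL] d1 unfolding d2_def by simp
          finally show ?thesis .
        qed
        thus "y \<in> S \<inter> ball ys (?k ys)" using yL LS by (auto simp: mem_ball dist_norm norm_minus_commute)
      qed
      have "card (F l) \<le> card (S \<inter> ball ys (?k ys))" using sub fin by (intro card_mono) auto
      also have "\<dots> \<le> M" by (rule kradius_ball[OF fin cS])
      finally show ?thesis .
    qed
    have "L \<subseteq> (\<Union>l\<in>K. F l)" using labK unfolding F_def by auto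
    hence "card L \<le> card (\<Union>l\<in>K. F l)" using finK finL unfolding F_def by (intro card_mono) auto
    also have "\<dots> \<le> (\<Sum>l\<in>K. card (F l))" using finK by (rule card_UN_le)
    also have "\<dots> \<le> (\<Sum>l\<in>K. M)" by (rule sum_mono) (rule Fbound)
    also have "\<dots> = card K * M" by simp
    finally have "card L \<le> card K * M" .
    hence "real (card L) \<le> real (card K * M)" by linarith
    thus ?thesis unfolding L_def by simp
  qed
  thus ?thesis by blast
qed

end
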